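(* For all $\mu>0$, $x\ge 0$ and $y>0$, $$\frac{P_{\mu+1}(x,y)}{P_{\mu}(x,y)}<c_{\mu+1}(x,y).$$
   Context: For $\mu>0$, $x>0$, $y\ge0$, the generalized Marcum $P$-function is $P_{\mu}(x,y)=x^{\frac12(1-\mu)}\int_0^{y} t^{\frac12(\mu-1)}e^{-t-x}I_{\mu-1}(2\sqrt{xt})\,dt$ ($I_\nu$ the modified Bessel function of the first kind); at $x=0$ it is defined by continuity, $P_\mu(0,y)=\gamma(\mu,y)/\Gamma(\mu)$ with $\gamma(\mu,y)=\int_0^y t^{\mu-1}e^{-t}dt$. For $x>0$, $y>0$, $c_{\mu}(x,y)=\sqrt{y/x}\,I_{\mu}(2\sqrt{xy})/I_{\mu-1}(2\sqrt{xy})$, and $c_\mu(0,y)=y/\mu$ (its limit as $x\to0^+$). *)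

theory Defs
  imports "HOL-Analysis.Analysis"
begin

text \<open>At z = 0 we use the limiting value (1 if nu = 0, else 0; only nu > -1 matters here).\<close>
definition bessel_I :: "real \<Rightarrow> real \<Rightarrow> real" where
  "bessel_I nu z =
     (if z = 0 then (if nu = 0 then 1 else 0)
      else (z / 2) powr nu * (\<Sum>k. (z / 2) ^ (2 * k) / (fact k * Gamma (real k + nu + 1))))"

definition lower_gamma :: "real \<Rightarrow> real \<Rightarrow> real" where
  "lower_gamma mu y = integral {0..y} (\<lambda>t. t powr (mu - 1) * exp (- t))"

definition marcumP :: "real \<Rightarrow> real \<Rightarrow> real \<Rightarrow> real" where
  "marcumP mu x y =
     (if x = 0 then lower_gamma mu y / Gamma mu
      else x powr ((1 - mu) / 2) *
        integral {0..y} (\<lambda>t. t powr ((mu - 1) / 2) * exp (- t - x) * bessel_I (mu - 1) (2 * sqrt (x * t))))"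

definition marcum_c :: "real \<Rightarrow> real \<Rightarrow> real \<Rightarrow> real" where
  "marcum_c mu x y =
     (if x = 0 then y / mu
      else sqrt (y / x) * bessel_I mu (2 * sqrt (x * y)) / bessel_I (mu - 1) (2 * sqrt (x * y)))"

end

theory Submission
  imports Defs
begin

lemma Gamma_plus1_pos: "(z::real) > 0 \<Longrightarrow> Gamma (z + 1) = z * Gamma z"
  by (rule Gamma_plus1) (auto elim!: nonpos_Ints_cases)

lemma summable_pow_Gamma:
  fixes z a :: real
  assumes "a > 0"
  shows "summable (\<lambda>m. \<bar>z\<bar>^m / Gamma (real m + a))"
proof (rule summable_ratio_test[where c="1/2" and N="nat \<lceil>2*\<bar>z\<bar>\<rceil>"])
  show "(1/2::real) < 1" by simp
  fix n assume n: "nat \<lceil>2*\<bar>z\<bar>\<rceil> \<le> n"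
  have pos: "real n + a > 0" using assms by simp
  have G: "Gamma (real (Suc n) + a) = (real n + a) * Gamma (real n + a)"
    using Gamma_plus1_pos[OF pos] by (simp add: algebra_simps)
  have Gp: "Gamma (real n + a) > 0" using Gamma_real_pos[OF pos] .
  have le: "\<bar>z\<bar> / (real n + a) \<le> 1/2"
  proof -
    have "2*\<bar>z\<bar> \<le> real n" using n by linarith
    then show ?thesis using pos assms by (simp add: field_simps)
  qed
  have "norm (\<bar>z\<bar>^Suc n / Gamma (real (Suc n) + a)) = (\<bar>z\<bar>^n / Gamma (real n + a)) * (\<bar>z\<bar> / (real n + a))"
  proof -
    have "(real n + a) * Gamma (real n + a) > 0" using pos Gp by simp
    then show ?thesis unfolding G using pos Gp by (simp add: abs_mult field_simps del: of_nat_Suc)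
  qed
  also have "\<dots> \<le> (\<bar>z\<bar>^n / Gamma (real n + a)) * (1/2)"
    by (rule mult_left_mono[OF le]) (use Gp in simp)
  also have "\<dots> = 1/2 * norm (\<bar>z\<bar>^n / Gamma (real n + a))" using Gp by simp
  finally show "norm (\<bar>z\<bar>^Suc n / Gamma (real (Suc n) + a)) \<le> 1/2 * norm (\<bar>z\<bar>^n / Gamma (real n + a))" .
qed

definition ex :: "real \<Rightarrow> nat \<Rightarrow> real" where "ex x m = (\<Sum>j\<le>m. x^j / fact j)"

lemma ex_le_exp: "x \<ge> 0 \<Longrightarrow> ex x m \<le> exp x"
proof -
  assume x: "x \<ge> 0"
  have "ex x m = (\<Sum>j\<in>{..m}. x^j /\<^sub>R fact j)" by (simp add: ex_def divide_inverse_commute scaleR_conv_of_real)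
  also have "\<dots> \<le> (\<Sum>j. x^j /\<^sub>R fact j)"
    by (rule sum_le_suminf) (use x summable_exp in auto)
  also have "\<dots> = exp x" by (simp add: exp_def)
  finally show ?thesis .
qed

lemma ex_nonneg: "x \<ge> 0 \<Longrightarrow> ex x m \<ge> 0"
  unfolding ex_def by (intro sum_nonneg) auto


definition phi :: "real \<Rightarrow> real \<Rightarrow> nat \<Rightarrow> real" where
  "phi nu x m = ex x m / Gamma (real m + nu + 1)"
definition sc :: "real \<Rightarrow> real \<Rightarrow> nat \<Rightarrow> real" where
  "sc nu x k = x^k / (fact k * Gamma (real k + nu))"

lemma summable_phi:
  assumes "nu > 0" "x \<ge> 0"
  shows "summable (\<lambda>m. phi nu x m * t^m)"
proof -
  have s: "summable (\<lambda>m. exp x * (\<bar>t\<bar>^m / Gamma (real m + (nu + 1))))"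
    by (rule summable_mult) (rule summable_pow_Gamma, use assms in simp)
  show ?thesis
  proof (rule summable_comparison_test[OF _ s], intro exI allI impI)
    fix m :: nat
    have Gp: "Gamma (real m + nu + 1) > 0" by (rule Gamma_real_pos) (use assms in simp)
    have "norm (phi nu x m * t^m) = ex x m * (\<bar>t\<bar>^m / Gamma (real m + nu + 1))"
      using Gp ex_nonneg[OF assms(2), of m] by (simp add: phi_def abs_mult power_abs)
    also have "\<dots> \<le> exp x * (\<bar>t\<bar>^m / Gamma (real m + nu + 1))"
      by (rule mult_right_mono[OF ex_le_exp[OF assms(2)]]) (use Gp in simp)
    finally show "norm (phi nu x m * t^m) \<le> exp x * (\<bar>t\<bar>^m / Gamma (real m + (nu + 1)))"
      by (simp add: add.assoc)
  qed
qed

lemma summable_sc: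
  assumes "nu > 0"
  shows "summable (\<lambda>k. sc nu x k * t^k)"
proof -
  have s: "summable (\<lambda>m. \<bar>x*t\<bar>^m / Gamma (real m + nu))"
    by (rule summable_pow_Gamma) (use assms in simp)
  show ?thesis
  proof (rule summable_comparison_test[OF _ s], intro exI allI impI)
    fix m :: nat
    have Gp: "Gamma (real m + nu) > 0" by (rule Gamma_real_pos) (use assms in simp)
    have f1: "fact m \<ge> (1::real)" by simp
    have "norm (sc nu x m * t^m) = \<bar>x*t\<bar>^m / (fact m * Gamma (real m + nu))"
      using Gp by (simp add: sc_def abs_mult power_abs power_mult_distrib)
    also have "\<dots> \<le> \<bar>x*t\<bar>^m / Gamma (real m + nu)"
      by (rule divide_left_mono) (use Gp f1 in \<open>auto intro: mult_pos_pos\<close>)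
    finally show "norm (sc nu x m * t^m) \<le> \<bar>x*t\<bar>^m / Gamma (real m + nu)" .
  qed
qed

lemma coeff_identity:
  assumes "nu > 0"
  shows "(real (Suc n) + nu) * phi nu x (Suc n) - phi nu x n = sc nu x (Suc n)"
proof -
  have pos: "real (Suc n) + nu > 0" using assms by simp
  have G: "Gamma (real (Suc n) + nu + 1) = (real (Suc n) + nu) * Gamma (real (Suc n) + nu)"
    using Gamma_plus1_pos[OF pos] .
  have G2: "Gamma (real n + nu + 1) = Gamma (real (Suc n) + nu)" by (simp add: algebra_simps)
  have Gp: "Gamma (real (Suc n) + nu) > 0" by (rule Gamma_real_pos[OF pos])
  have e: "ex x (Suc n) = ex x n + x^Suc n / fact (Suc n)" by (simp add: ex_def)
  show ?thesis
  proof -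
    have c: "(real (Suc n) + nu) * (A / ((real (Suc n) + nu) * Gamma (real (Suc n) + nu))) = A / Gamma (real (Suc n) + nu)" for A
    proof -
      have "\<And>a G A::real. a \<noteq> 0 \<Longrightarrow> a * (A / (a * G)) = A / G" by simp
      then show ?thesis using pos by (metis less_irrefl)
    qed
    show ?thesis unfolding phi_def sc_def G G2 e c
      by (simp add: add_divide_distrib divide_divide_eq_left del: of_nat_Suc fact_Suc)
  qed
qed

lemma phi0: "nu > 0 \<Longrightarrow> nu * phi nu x 0 = sc nu x 0"
  using Gamma_plus1_pos[of nu] by (simp add: phi_def sc_def ex_def)

lemma series_identity:
  assumes "nu > 0" "x \<ge> 0"
  shows "(nu - t) * (\<Sum>m. phi nu x m * t^m) + t * (\<Sum>m. diffs (phi nu x) m * t^m)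
         = (\<Sum>k. sc nu x k * t^k)"
proof -
  let ?P = "\<Sum>m. phi nu x m * t^m" and ?D = "\<Sum>m. diffs (phi nu x) m * t^m"
  have sP: "(\<lambda>m. phi nu x m * t^m) sums ?P" using summable_phi[OF assms] by (rule summable_sums)
  have sD: "(\<lambda>m. diffs (phi nu x) m * t^m) sums ?D"
    using termdiff_converges_all[of "phi nu x" t] summable_phi[OF assms] by (intro summable_sums) auto
  have sS: "(\<lambda>k. sc nu x k * t^k) sums (\<Sum>k. sc nu x k * t^k)"
    using summable_sc[OF assms(1)] by (rule summable_sums)
  have a: "(\<lambda>n. (t * (diffs (phi nu x) n * t^n) - t * (phi nu x n * t^n))) sums (t * ?D - t * ?P)"
    by (intro sums_diff sums_mult sD sP)
  have a2: "(\<lambda>n. (sc nu x (Suc n) - nu * phi nu x (Suc n)) * t^(Suc n)) sums (t * ?D - t * ?P)"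
  proof -
    have "t * (diffs (phi nu x) n * t^n) - t * (phi nu x n * t^n) = (sc nu x (Suc n) - nu * phi nu x (Suc n)) * t^(Suc n)" for n
    proof -
      have "t * (diffs (phi nu x) n * t^n) - t * (phi nu x n * t^n) = (real (Suc n) * phi nu x (Suc n) - phi nu x n) * t^(Suc n)"
        unfolding diffs_def by (simp add: algebra_simps del: of_nat_Suc)
      also have "real (Suc n) * phi nu x (Suc n) - phi nu x n = sc nu x (Suc n) - nu * phi nu x (Suc n)"
        using coeff_identity[OF assms(1), of n x] by (simp add: algebra_simps del: of_nat_Suc)
      finally show ?thesis .
    qed
    then show ?thesis using a by simp
  qed
  have b: "(\<lambda>n. (sc nu x n - nu * phi nu x n) * t^n) sums ((\<Sum>k. sc nu x k * t^k) - nu * ?P)"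
  proof -
    have "(\<lambda>n. sc nu x n * t^n - nu * (phi nu x n * t^n)) sums ((\<Sum>k. sc nu x k * t^k) - nu * ?P)"
      by (intro sums_diff sums_mult sS sP)
    then show ?thesis by (simp add: algebra_simps)
  qed
  have "(\<lambda>n. (sc nu x n - nu * phi nu x n) * t^n) sums ((t * ?D - t * ?P) + (sc nu x 0 - nu * phi nu x 0) * t^0)"
    using a2 by (subst sums_Suc_iff[symmetric]) simp
  then have "(\<lambda>n. (sc nu x n - nu * phi nu x n) * t^n) sums (t * ?D - t * ?P)"
    using phi0[OF assms(1), of x] by simp
  with b have "t * ?D - t * ?P = (\<Sum>k. sc nu x k * t^k) - nu * ?P" using sums_unique2 by blast
  then show ?thesis by (simp add: algebra_simps)
qed


definition Phi :: "real \<Rightarrow> real \<Rightarrow> real \<Rightarrow> real" where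
  "Phi nu x t = (\<Sum>m. phi nu x m * t^m)"
definition Sx :: "real \<Rightarrow> real \<Rightarrow> real \<Rightarrow> real" where
  "Sx nu x t = (\<Sum>k. sc nu x k * t^k)"
definition H :: "real \<Rightarrow> real \<Rightarrow> real \<Rightarrow> real" where
  "H nu x t = exp (-x-t) * t powr nu * Phi nu x t"

lemma Phi_deriv:
  assumes "nu > 0" "x \<ge> 0"
  shows "(Phi nu x has_real_derivative (\<Sum>m. diffs (phi nu x) m * t^m)) (at t)"
  unfolding Phi_def[abs_def]
  by (rule termdiffs_strong_converges_everywhere) (rule summable_phi[OF assms])

lemma H_deriv:
  assumes "nu > 0" "x \<ge> 0" "t > 0"
  shows "(H nu x has_real_derivative exp (-x-t) * t powr (nu-1) * Sx nu x t) (at t)"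
proof -
  let ?D = "\<Sum>m. diffs (phi nu x) m * t^m"
  have d: "(H nu x has_real_derivative
     (exp (-x-t) * (-1)) * t powr nu * Phi nu x t + exp (-x-t) * (nu * t powr (nu - 1)) * Phi nu x t
      + exp (-x-t) * t powr nu * ?D) (at t)"
  proof -
    have e: "((\<lambda>t. exp (-x-t)) has_real_derivative exp (-x-t) * (-1)) (at t)"
      by (rule derivative_eq_intros refl | simp)+
    have p: "((\<lambda>t. t powr nu) has_real_derivative nu * t powr (nu - 1)) (at t)"
      by (rule has_real_derivative_powr[OF assms(3)])
    have ep: "((\<lambda>t. exp (-x-t) * t powr nu) has_real_derivative
        exp (-x-t) * (-1) * t powr nu + exp (-x-t) * (nu * t powr (nu - 1))) (at t)"
      using DERIV_mult[OF e p] by (simp add: algebra_simps)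
    show ?thesis unfolding H_def[abs_def]
      using DERIV_mult[OF ep Phi_deriv[OF assms(1,2), of t]] by (simp add: algebra_simps)
  qed
  have tp: "t powr nu = t * t powr (nu - 1)"
    using assms(3) by (simp add: powr_mult_base)
  have eq: "(exp (-x-t) * (-1)) * t powr nu * Phi nu x t + exp (-x-t) * (nu * t powr (nu - 1)) * Phi nu x t
      + exp (-x-t) * t powr nu * ?D = exp (-x-t) * t powr (nu-1) * ((nu - t) * Phi nu x t + t * ?D)"
    unfolding tp by (simp add: algebra_simps)
  have "(nu - t) * Phi nu x t + t * ?D = Sx nu x t"
    unfolding Phi_def Sx_def by (rule series_identity[OF assms(1,2)])
  then show ?thesis using d eq by simp
qed

lemma H_cont:
  assumes "nu > 0" "x \<ge> 0"
  shows "continuous_on {0..y} (H nu x)"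
proof -
  have "continuous_on {0..y} (Phi nu x)"
    by (intro continuous_at_imp_continuous_on ballI DERIV_isCont[OF Phi_deriv[OF assms]])
  moreover have "continuous_on {0..y} (\<lambda>t::real. t powr nu)"
    by (rule continuous_on_powr') (use assms in \<open>auto intro: continuous_intros\<close>)
  moreover have "continuous_on {0..y} (\<lambda>t::real. exp (-x-t))"
    by (intro continuous_intros)
  ultimately show ?thesis unfolding H_def[abs_def]
    by (intro continuous_on_mult) auto
qed

lemma H0: "nu > 0 \<Longrightarrow> H nu x 0 = 0" by (simp add: H_def)

lemma H_integral:
  assumes "nu > 0" "x \<ge> 0" "y > 0"
  shows "((\<lambda>t. exp (-x-t) * t powr (nu-1) * Sx nu x t) has_integral H nu x y) {0..y}"
proof -
  have "((\<lambda>t. exp (-x-t) * t powr (nu-1) * Sx nu x t) has_integral H nu x y - H nu x 0) {0..y}"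
    by (rule fundamental_theorem_of_calculus_interior)
       (use assms H_cont[OF assms(1,2)] H_deriv[OF assms(1,2)] in
         \<open>auto simp: has_real_derivative_iff_has_vector_derivative[symmetric]\<close>)
  then show ?thesis using H0[OF assms(1)] by simp
qed


lemma sqrt_powr_split:
  assumes "x > 0" "t > 0"
  shows "sqrt (x*t) powr a = x powr (a/2) * t powr (a/2)"
proof -
  have "sqrt (x*t) = (x*t) powr (1/2)" using assms by (simp add: powr_half_sqrt)
  then have "sqrt (x*t) powr a = (x*t) powr (a/2)" using assms by (simp add: powr_powr)
  then show ?thesis using assms by (simp add: powr_mult)
qed

lemma bessel_series:
  assumes "x > 0" "t > 0"
  shows "bessel_I (nu - 1) (2 * sqrt (x*t)) = x powr ((nu-1)/2) * t powr ((nu-1)/2) * Sx nu x t"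
proof -
  have ne: "2 * sqrt (x*t) \<noteq> 0" using assms by simp
  have terms: "sqrt (x*t) ^ (2*k) / (fact k * Gamma (real k + nu)) = sc nu x k * t^k" for k
  proof -
    have "sqrt (x*t) ^ (2*k) = x^k * t^k" using assms
      by (simp add: power_mult power_mult_distrib)
    then show ?thesis by (simp add: sc_def)
  qed
  show ?thesis unfolding bessel_I_def using ne
    by (simp add: terms Sx_def sqrt_powr_split[OF assms])
qed

lemma marcumP_H:
  assumes "nu > 0" "x \<ge> 0" "y > 0"
  shows "marcumP nu x y = H nu x y"
proof (cases "x = 0")
  case True
  have S0: "Sx nu 0 t = 1 / Gamma nu" for t
  proof -
    have "Sx nu 0 t = (\<Sum>k. sc nu 0 k * t^k)" by (simp add: Sx_def)
    also have "\<dots> = (\<Sum>k\<in>{0}. sc nu 0 k * t^k)"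
      by (rule suminf_finite) (auto simp: sc_def)
    finally show ?thesis by (simp add: sc_def)
  qed
  have Gp: "Gamma nu > 0" using Gamma_real_pos assms(1) by blast
  have "((\<lambda>t. Gamma nu * (exp (-0-t) * t powr (nu-1) * Sx nu 0 t)) has_integral Gamma nu * H nu 0 y) {0..y}"
    using H_integral[OF assms(1) _ assms(3), of 0] by (intro has_integral_mult_right) simp
  then have "((\<lambda>t. t powr (nu - 1) * exp (- t)) has_integral Gamma nu * H nu 0 y) {0..y}"
    using Gp by (simp add: S0 mult.commute)
  then have "lower_gamma nu y = Gamma nu * H nu 0 y"
    unfolding lower_gamma_def by (rule integral_unique)
  then show ?thesis using True Gp by (simp add: marcumP_def)
next
  case False
  then have xp: "x > 0" using assms by simp
  let ?c = "x powr ((nu-1)/2)"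
  have I0: "((\<lambda>t. ?c * (exp (-x-t) * t powr (nu-1) * Sx nu x t)) has_integral ?c * H nu x y) {0..y}"
    using H_integral[OF assms] by (rule has_integral_mult_right)
  have I: "((\<lambda>t. t powr ((nu - 1) / 2) * exp (- t - x) * bessel_I (nu - 1) (2 * sqrt (x * t)))
      has_integral ?c * H nu x y) {0..y}"
  proof (rule has_integral_spike_finite[where S="{0}"])
    fix t assume t: "t \<in> {0..y} - {0}"
    then have tp: "t > 0" by auto
    have tt: "t powr ((nu - 1) / 2) * t powr ((nu - 1) / 2) = t powr (nu - 1)"
      by (simp add: powr_add[symmetric])
    show "t powr ((nu - 1) / 2) * exp (- t - x) * bessel_I (nu - 1) (2 * sqrt (x * t)) =
      ?c * (exp (-x-t) * t powr (nu-1) * Sx nu x t)"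
      unfolding bessel_series[OF xp tp] tt[symmetric] by (simp add: algebra_simps)
  qed (use I0 in simp_all)
  have cc: "x powr ((1 - nu) / 2) * ?c = 1"
    using xp by (simp add: powr_add[symmetric] add_divide_distrib[symmetric])
  show ?thesis unfolding marcumP_def using False integral_unique[OF I] cc
    by (simp add: mult.assoc[symmetric])
qed


lemma marcum_c_series:
  assumes "mu > 0" "x \<ge> 0" "y > 0"
  shows "marcum_c (mu + 1) x y =
    y * (\<Sum>k. (x*y)^k / (fact k * Gamma (real k + mu + 1)) * (1 / (real k + mu + 1)))
      / (\<Sum>k. (x*y)^k / (fact k * Gamma (real k + mu + 1)))"
proof -
  have Gk: "Gamma (real k + mu + 2) = (real k + mu + 1) * Gamma (real k + mu + 1)" for k
    using Gamma_plus1_pos[of "real k + mu + 1"] assms(1) by (simp add: add.assoc)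
  have A: "(x*y)^k / (fact k * Gamma (real k + mu + 1)) * (1 / (real k + mu + 1))
        = (x*y)^k / (fact k * Gamma (real k + mu + 2))" for k
    unfolding Gk by (simp add: field_simps)
  show ?thesis
  proof (cases "x = 0")
    case True
    have z: "(\<Sum>k. (0*y)^k / (fact k * c k)) = 1 / c 0" for c :: "nat \<Rightarrow> real"
    proof -
      have "(\<Sum>k. (0*y)^k / (fact k * c k)) = (\<Sum>k\<in>{0}. (0*y)^k / (fact k * c k))"
        by (rule suminf_finite) auto
      then show ?thesis by simp
    qed
    have G2: "Gamma (mu + 2) = (mu + 1) * Gamma (mu + 1)" using Gk[of 0] by simp
    have Gp: "Gamma (1 + mu) > 0" using assms(1) by (intro Gamma_real_pos) simp
    have Gq: "Gamma (1 + mu) + mu * Gamma (1 + mu) > 0" using Gp assms(1) by (simp add: add_pos_pos)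
    have "marcum_c (mu + 1) x y = y * (1 / Gamma (real 0 + mu + 2)) / (1 / Gamma (real 0 + mu + 1))"
      using True Gp Gq assms(1) by (simp add: marcum_c_def G2 field_simps)
    then show ?thesis unfolding A
      by (simp only: True z[of "\<lambda>k. Gamma (real k + mu + 2)"] z[of "\<lambda>k. Gamma (real k + mu + 1)"])
  next
    case False
    then have xp: "x > 0" using assms by simp
    let ?s = "sqrt (x*y)"
    have sp: "?s > 0" using xp assms by simp
    have ne: "2 * ?s \<noteq> 0" using xp assms by simp
    have I1: "bessel_I (mu + 1) (2 * ?s) = ?s * ?s powr mu * (\<Sum>k. (x*y)^k / (fact k * Gamma (real k + mu + 2)))"
    proof -
      have t: "?s ^ (2*k) = (x*y)^k" for k using xp assms by (simp add: power_mult)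
      have "?s powr (mu + 1) = ?s * ?s powr mu" using sp by (simp add: powr_add)
      then show ?thesis unfolding bessel_I_def using ne by (simp add: t add.assoc)
    qed
    have I0: "bessel_I mu (2 * ?s) = ?s powr mu * (\<Sum>k. (x*y)^k / (fact k * Gamma (real k + mu + 1)))"
    proof -
      have t: "?s ^ (2*k) = (x*y)^k" for k using xp assms by (simp add: power_mult)
      show ?thesis unfolding bessel_I_def using ne by (simp add: t add.assoc)
    qed
    have sq: "sqrt (y/x) * ?s = y"
    proof -
      have "sqrt (y/x) * ?s = sqrt (y/x * (x*y))" by (simp only: real_sqrt_mult)
      also have "y/x * (x*y) = y^2" using xp by (simp add: field_simps power2_eq_square)
      finally show ?thesis using assms by simp
    qed
    have pp: "?s powr mu > 0" using xp assms by simp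
    have "marcum_c (mu + 1) x y = sqrt (y/x) * bessel_I (mu + 1) (2 * ?s) / bessel_I mu (2 * ?s)"
      using False by (simp add: marcum_c_def)
    also have "\<dots> = (sqrt (y/x) * ?s) * (\<Sum>k. (x*y)^k / (fact k * Gamma (real k + mu + 2)))
         / (\<Sum>k. (x*y)^k / (fact k * Gamma (real k + mu + 1)))"
      unfolding I1 I0 using pp by (simp add: field_simps)
    finally show ?thesis unfolding sq A .
  qed
qed


lemma finite_ineq:
  fixes u v r :: "nat \<Rightarrow> real"
  assumes r: "\<And>m k. m < k \<Longrightarrow> r k \<le> r m"
    and uv: "\<And>m k. m < k \<Longrightarrow> u m * v k \<le> u k * v m"
    and n: "n \<ge> 2"
  shows "(\<Sum>m<n. u m * r m) * (\<Sum>k<n. v k) - (\<Sum>m<n. u m) * (\<Sum>k<n. v k * r k)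
         \<le> (r 0 - r 1) * (u 0 * v 1 - u 1 * v 0)"
proof -
  define g where "g m k = u m * v k * (r m - r k)" for m k
  define h where "h p = g (fst p) (snd p) + g (snd p) (fst p)" for p
  let ?A = "{..<n} \<times> {..<n}"
  have F: "(\<Sum>m<n. u m * r m) * (\<Sum>k<n. v k) - (\<Sum>m<n. u m) * (\<Sum>k<n. v k * r k)
        = (\<Sum>p\<in>?A. g (fst p) (snd p))"
  proof -
    have "(\<Sum>m<n. u m * r m) * (\<Sum>k<n. v k) - (\<Sum>m<n. u m) * (\<Sum>k<n. v k * r k)
        = (\<Sum>m<n. \<Sum>k<n. g m k)"
      unfolding sum_product sum_subtractf[symmetric] g_def by (intro sum.cong refl) (simp add: algebra_simps)
    also have "\<dots> = (\<Sum>p\<in>?A. g (fst p) (snd p))" by (simp add: sum.cartesian_product split_def)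
    finally show ?thesis .
  qed
  have sw: "(\<Sum>p\<in>?A. g (fst p) (snd p)) = (\<Sum>p\<in>?A. g (snd p) (fst p))"
  proof -
    have "(\<Sum>p\<in>?A. g (fst p) (snd p)) = (\<Sum>m<n. \<Sum>k<n. g m k)" by (simp add: sum.cartesian_product split_def)
    also have "\<dots> = (\<Sum>k<n. \<Sum>m<n. g m k)" by (rule sum.swap)
    also have "\<dots> = (\<Sum>p\<in>?A. g (snd p) (fst p))" by (simp add: sum.cartesian_product split_def)
    finally show ?thesis .
  qed
  have hle: "h p \<le> 0" for p
  proof -
    obtain m k where p: "p = (m, k)" by force
    have G: "g m k + g k m \<le> 0" if "m < k" for m k
    proof -
      have "g m k + g k m = (r m - r k) * (u m * v k - u k * v m)" by (simp add: g_def algebra_simps)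
      also have "\<dots> \<le> 0" using r[OF that] uv[OF that] by (simp add: mult_nonneg_nonpos)
      finally show ?thesis .
    qed
    show ?thesis unfolding h_def p using G[of m k] G[of k m]
      by (cases m k rule: linorder_cases) (auto simp: g_def)
  qed
  have sub: "{(0,1),(1,0)} \<subseteq> ?A" using n by auto
  have "(\<Sum>p\<in>{(0::nat,1::nat),(1,0)}. - h p) \<le> (\<Sum>p\<in>?A. - h p)"
    by (rule sum_mono2) (use sub hle in auto)
  then have "(\<Sum>p\<in>?A. h p) \<le> h (0,1) + h (1,0)" by (simp add: sum_negf)
  moreover have "(\<Sum>p\<in>?A. h p) = 2 * (\<Sum>p\<in>?A. g (fst p) (snd p))"
    unfolding h_def sum.distrib sw[symmetric] by simp
  moreover have "h (0,1) + h (1,0) = 2 * ((r 0 - r 1) * (u 0 * v 1 - u 1 * v 0))"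
    by (simp add: h_def g_def algebra_simps)
  ultimately show ?thesis unfolding F by linarith
qed

lemma series_ineq:
  fixes u v r :: "nat \<Rightarrow> real"
  assumes r: "\<And>m k. m < k \<Longrightarrow> r k \<le> r m" and r01: "r 1 < r 0"
    and uv: "\<And>m k. m < k \<Longrightarrow> u m * v k \<le> u k * v m"
    and uv01: "u 0 * v 1 < u 1 * v 0"
    and s: "summable u" "summable v" "summable (\<lambda>m. u m * r m)" "summable (\<lambda>k. v k * r k)"
  shows "(\<Sum>m. u m * r m) * (\<Sum>k. v k) < (\<Sum>m. u m) * (\<Sum>k. v k * r k)"
proof -
  have lim: "(\<lambda>n. (\<Sum>m<n. u m * r m) * (\<Sum>k<n. v k) - (\<Sum>m<n. u m) * (\<Sum>k<n. v k * r k))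
      \<longlonglongrightarrow> (\<Sum>m. u m * r m) * (\<Sum>k. v k) - (\<Sum>m. u m) * (\<Sum>k. v k * r k)"
    by (intro tendsto_intros summable_LIMSEQ s)
  have "(\<Sum>m. u m * r m) * (\<Sum>k. v k) - (\<Sum>m. u m) * (\<Sum>k. v k * r k)
        \<le> (r 0 - r 1) * (u 0 * v 1 - u 1 * v 0)"
    by (rule LIMSEQ_le_const2[OF lim]) (intro exI[of _ 2] allI impI finite_ineq[OF r uv])
  moreover have "(r 0 - r 1) * (u 0 * v 1 - u 1 * v 0) < 0"
    using r01 uv01 by (simp add: mult_pos_neg)
  ultimately show ?thesis by linarith
qed

lemma ex_step:
  assumes "x \<ge> 0"
  shows "x * ex x k \<le> real (Suc k) * ex x (Suc k)"
proof -
  have "x * ex x k = (\<Sum>j\<le>k. x^Suc j / fact j)" by (simp add: ex_def sum_distrib_left)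
  also have "\<dots> \<le> (\<Sum>j\<le>k. real (Suc k) * (x^Suc j / fact (Suc j)))"
  proof (rule sum_mono)
    fix j assume "j \<in> {..k}"
    then have jk: "real (Suc j) \<le> real (Suc k)" by simp
    have "x^Suc j / fact j = real (Suc j) * (x^Suc j / fact (Suc j))"
      by (simp add: field_simps del: of_nat_Suc)
    also have "\<dots> \<le> real (Suc k) * (x^Suc j / fact (Suc j))"
      by (rule mult_right_mono[OF jk]) (use assms in simp)
    finally show "x^Suc j / fact j \<le> real (Suc k) * (x^Suc j / fact (Suc j))" .
  qed
  also have "\<dots> = real (Suc k) * (\<Sum>j\<le>k. x^Suc j / fact (Suc j))" by (simp add: sum_distrib_left)
  also have "\<dots> \<le> real (Suc k) * ex x (Suc k)"
  proof -
    have "ex x (Suc k) = 1 + (\<Sum>j\<le>k. x^Suc j / fact (Suc j))"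
      unfolding ex_def by (subst sum.atMost_Suc_shift) simp
    then show ?thesis by simp
  qed
  finally show ?thesis .
qed

lemma ex_Q:
  assumes "x \<ge> 0"
  shows "ex x m * x^d * fact m \<le> ex x (m + d) * fact (m + d)"
proof (induction d)
  case 0 then show ?case by simp
next
  case (Suc d)
  have "ex x m * x^Suc d * fact m = x * (ex x m * x^d * fact m)" by (simp add: algebra_simps)
  also have "\<dots> \<le> x * (ex x (m + d) * fact (m + d))"
    by (rule mult_left_mono[OF Suc.IH assms])
  also have "\<dots> = (x * ex x (m + d)) * fact (m + d)" by simp
  also have "\<dots> \<le> (real (Suc (m+d)) * ex x (Suc (m + d))) * fact (m + d)"
    by (rule mult_right_mono[OF ex_step[OF assms]]) simp
  also have "\<dots> = ex x (m + Suc d) * fact (m + Suc d)" by (simp add: algebra_simps)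
  finally show ?case .
qed

lemma ex_mono_ratio:
  assumes "x \<ge> 0" "m < k"
  shows "ex x m * x^k / fact k \<le> ex x k * x^m / fact m"
proof -
  obtain d where k: "k = m + d" using assms(2) less_imp_add_positive by blast
  have Q: "ex x m * x^d * fact m \<le> ex x k * fact k" using ex_Q[OF assms(1)] k by simp
  have "ex x m * x^k / fact k = x^m * (ex x m * x^d * fact m) / (fact m * fact k)"
    unfolding k by (simp add: power_add field_simps)
  also have "\<dots> \<le> x^m * (ex x k * fact k) / (fact m * fact k)"
    by (intro divide_right_mono mult_left_mono Q) (use assms in auto)
  also have "\<dots> = ex x k * x^m / fact m" by (simp add: field_simps)
  finally show ?thesis .
qed


theorem theorem3:
  fixes mu x y :: real
  assumes "mu > 0" and "x \<ge> 0" and "y > 0"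
  shows "marcumP (mu + 1) x y / marcumP mu x y < marcum_c (mu + 1) x y"
proof -
  note mu = assms(1) and x = assms(2) and y = assms(3)
  define G where "G m = Gamma (real m + mu + 1)" for m :: nat
  have Gp: "G m > 0" for m unfolding G_def by (rule Gamma_real_pos) (use mu in simp)
  define u where "u m = phi mu x m * y^m" for m
  define v where "v k = (x*y)^k / (fact k * G k)" for k
  define r where "r k = 1 / (real k + mu + 1)" for k :: nat
  have u_alt: "u m = ex x m * y^m / G m" for m by (simp add: u_def phi_def G_def)
  have phi1: "phi (mu + 1) x m * y^m = u m * r m" for m
  proof -
    have "Gamma (real m + (mu + 1) + 1) = (real m + mu + 1) * G m"
      unfolding G_def using Gamma_plus1_pos[of "real m + mu + 1"] mu by (simp add: add.assoc)
    then show ?thesis using Gp[of m] mu by (simp add: u_alt r_def phi_def field_simps)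
  qed
  have sc1: "sc (mu + 1) x k * y^k = v k" for k
    by (simp add: sc_def v_def G_def power_mult_distrib add.assoc)
  have sc2: "sc (mu + 2) x k * y^k = v k * r k" for k
  proof -
    have "Gamma (real k + (mu + 2)) = (real k + mu + 1) * G k"
      unfolding G_def using Gamma_plus1_pos[of "real k + mu + 1"] mu by (simp add: add.assoc add.commute add.left_commute)
    then show ?thesis using Gp[of k] mu by (simp add: v_def r_def sc_def field_simps power_mult_distrib)
  qed
  have su: "summable u" unfolding u_def by (rule summable_phi[OF mu x])
  have sur: "summable (\<lambda>m. u m * r m)"
    using summable_phi[of "mu + 1" x y] mu x by (simp add: phi1)
  have sv: "summable v" using summable_sc[of "mu + 1" x y] mu by (simp add: sc1)
  have svr: "summable (\<lambda>k. v k * r k)" using summable_sc[of "mu + 2" x y] mu by (simp add: sc2)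
  have u0: "u m \<ge> 0" for m unfolding u_alt using ex_nonneg[OF x, of m] Gp[of m] y by simp
  have v0: "v k \<ge> 0" for k unfolding v_def using Gp[of k] x y by simp
  have upos: "u 0 > 0" unfolding u_alt using Gp[of 0] by (simp add: ex_def)
  have vpos: "v 0 > 0" unfolding v_def using Gp[of 0] by simp
  have Su: "(\<Sum>m. u m) > 0" by (rule suminf_pos2[OF su]) (use u0 upos in auto)
  have Sv: "(\<Sum>k. v k) > 0" by (rule suminf_pos2[OF sv]) (use v0 vpos in auto)
  have rmono: "r k \<le> r m" if "m < k" for m k
    unfolding r_def using that mu by (intro divide_left_mono) (auto intro: mult_pos_pos)
  have r01: "r 1 < r 0" unfolding r_def using mu by (simp add: field_simps)
  have uv: "u m * v k \<le> u k * v m" if mk: "m < k" for m k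
  proof -
    have c: "0 \<le> y^(m+k) / (G m * G k)" using Gp[of m] Gp[of k] y by simp
    have "u m * v k = (ex x m * x^k / fact k) * (y^(m+k) / (G m * G k))"
      unfolding u_alt v_def by (simp add: power_mult_distrib power_add field_simps)
    also have "\<dots> \<le> (ex x k * x^m / fact m) * (y^(m+k) / (G m * G k))"
      by (rule mult_right_mono[OF ex_mono_ratio[OF x mk] c])
    also have "\<dots> = u k * v m"
      unfolding u_alt v_def by (simp add: power_mult_distrib power_add field_simps)
    finally show ?thesis .
  qed
  have uv01: "u 0 * v 1 < u 1 * v 0"
  proof -
    have "u 0 * v 1 = x * y / (G 0 * G 1)" by (simp add: u_alt v_def ex_def)
    moreover have "u 1 * v 0 = (1 + x) * y / (G 0 * G 1)" by (simp add: u_alt v_def ex_def mult.commute)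
    moreover have "x * y < (1 + x) * y" using y by (simp add: distrib_right)
    ultimately show ?thesis using Gp[of 0] Gp[of 1] by (simp add: divide_strict_right_mono)
  qed
  have key: "(\<Sum>m. u m * r m) * (\<Sum>k. v k) < (\<Sum>m. u m) * (\<Sum>k. v k * r k)"
    by (rule series_ineq[OF rmono r01 uv uv01 su sv sur svr])
  have P1: "marcumP (mu + 1) x y = exp (-x-y) * y powr (mu + 1) * (\<Sum>m. u m * r m)"
    using marcumP_H[of "mu + 1" x y] mu x y by (simp add: H_def Phi_def phi1)
  have P0: "marcumP mu x y = exp (-x-y) * y powr mu * (\<Sum>m. u m)"
    using marcumP_H[OF mu x y] by (simp add: H_def Phi_def u_def)
  have C: "marcum_c (mu + 1) x y = y * (\<Sum>k. v k * r k) / (\<Sum>k. v k)"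
    using marcum_c_series[OF mu x y] by (simp add: v_def r_def G_def)
  have yp: "y powr (mu + 1) = y * y powr mu" using y by (simp add: powr_add)
  have ratio: "marcumP (mu + 1) x y / marcumP mu x y = y * (\<Sum>m. u m * r m) / (\<Sum>m. u m)"
    unfolding P1 P0 yp using y by (simp add: field_simps)
  have "y * (\<Sum>m. u m * r m) / (\<Sum>m. u m) < y * (\<Sum>k. v k * r k) / (\<Sum>k. v k)"
    using key Su Sv y by (simp add: field_simps)
  then show ?thesis unfolding ratio C .
qed

end
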